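(* Let $G$ be a finite group (written additively, not necessarily abelian) with $\#G=q$, let $f:G\to G$ with $v=\#\mathrm{Im}(f)$, and let $k$ be an integer with $1\le k\le q$. If \[ q\sum_{i=0}^{k}(-1)^i\binom{k}{i}\frac{\binom{v}{i}}{\binom{q}{i}}<1,\] then there exists a cover of $G$ associated with $f$ of cardinality $k$.
   Context: $\mathrm{Im}(f)=\{f(x):x\in G\}$. The subtraction table $M_f$ has rows indexed by $G$, columns indexed by $\mathrm{Im}(f)$, and entry $m_{r,c}=r-c$ at position $(r,c)$. A subset $S\subseteq G$ is a cover of $G$ associated with $f$ if every row of $M_f$ contains an entry lying in $S$, i.e. for every $r\in G$ there exists $c\in\mathrm{Im}(f)$ with $r-c\in S$. *)

theory Defs
  imports Complex_Main
begin

text \<open>A finite group G written additively (not necessarily abelian) is modelled as a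
  finite type of class group_add.\<close>

definition subtraction_table_entry :: "'a::group_add \<Rightarrow> 'a \<Rightarrow> 'a" where
  "subtraction_table_entry r c = r - c"

definition is_cover_assoc :: "('a::group_add \<Rightarrow> 'a) \<Rightarrow> 'a set \<Rightarrow> bool" where
  "is_cover_assoc f S \<longleftrightarrow> (\<forall>r. \<exists>c \<in> range f. subtraction_table_entry r c \<in> S)"

end

theory Submission imports Defs begin

lemma alt_id:
  "v \<le> q \<Longrightarrow> (\<Sum>i=0..k. (-1)^i * int (v choose i) * int ((q-i) choose (k-i))) = int ((q-v) choose k)"
proof (induction v arbitrary: q k)
  case 0
  have "(\<Sum>i=0..k. (-1)^i * int (0 choose i) * int ((q-i) choose (k-i))) = (\<Sum>i\<in>{0}. (-1)^i * int (0 choose i) * int ((q-i) choose (k-i)))"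
    by (rule sum.mono_neutral_right) auto
  then show ?case by simp
next
  case (Suc v)
  obtain q' where q: "q = Suc q'" using Suc.prems by (cases q) auto
  have vq: "v \<le> q'" "v \<le> q" using Suc.prems q by auto
  show ?case
  proof (cases k)
    case 0
    then show ?thesis by simp
  next
    case (Suc k')
    have IH1: "(\<Sum>i=0..k'. (-1)^i * int (v choose i) * int ((q'-i) choose (k'-i))) = int ((q'-v) choose k')"
      using Suc.IH[OF vq(1)] .
    have IH2: "(\<Sum>i=0..k. (-1)^i * int (v choose i) * int ((q-i) choose (k-i))) = int ((q-v) choose k)"
      using Suc.IH[OF vq(2)] .
    have A: "(\<Sum>i=0..k. (-1)^i * int (v choose i) * int ((q-i) choose (k-i))) =
       int (q choose k) + (\<Sum>i=0..k'. (-1)^(Suc i) * int (v choose Suc i) * int ((q'-i) choose (k'-i)))"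
      unfolding Suc by (subst sum.atLeast0_atMost_Suc_shift) (simp add: q)
    have B: "(\<Sum>i=0..k. (-1)^i * int (Suc v choose i) * int ((q-i) choose (k-i))) =
       int (q choose k) + (\<Sum>i=0..k'. (-1)^(Suc i) * int (Suc v choose Suc i) * int ((q'-i) choose (k'-i)))"
      unfolding Suc by (subst sum.atLeast0_atMost_Suc_shift) (simp add: q)
    have C: "(\<Sum>i=0..k'. (-1)^(Suc i) * int (Suc v choose Suc i) * int ((q'-i) choose (k'-i)))
       = (\<Sum>i=0..k'. (-1)^(Suc i) * int (v choose Suc i) * int ((q'-i) choose (k'-i)))
         - (\<Sum>i=0..k'. (-1)^i * int (v choose i) * int ((q'-i) choose (k'-i)))"
      unfolding sum_subtractf[symmetric] by (rule sum.cong) (auto simp: algebra_simps)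
    have D: "q - v = Suc (q' - v)" using q vq by auto
    show ?thesis using A B C IH1 IH2 D Suc q by (simp add: algebra_simps)
  qed
qed

theorem theorem6p1:
  fixes f :: "'a::{group_add, finite} \<Rightarrow> 'a" and k :: nat
  assumes "1 \<le> k" and "k \<le> card (UNIV :: 'a set)"
    and "real (card (UNIV :: 'a set)) *
          (\<Sum>i = 0..k. (-1) ^ i * real (k choose i) *
              (real (card (range f) choose i) / real (card (UNIV :: 'a set) choose i))) < 1"
  shows "\<exists>S :: 'a set. card S = k \<and> is_cover_assoc f S"
proof -
  define q where "q = card (UNIV :: 'a set)"
  define v where "v = card (range f)"
  have vq: "v \<le> q" unfolding v_def q_def by (rule card_mono) auto
  have kq: "k \<le> q" using assms(2) q_def by simp
  have qk0: "real (q choose k) > 0" using kq by simp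
  have "(\<Sum>i = 0..k. (-1) ^ i * real (k choose i) * (real (v choose i) / real (q choose i)))
      = (\<Sum>i = 0..k. (-1) ^ i * real (v choose i) * real ((q-i) choose (k-i))) / real (q choose k)"
    unfolding sum_divide_distrib
  proof (rule sum.cong)
    fix i assume "i \<in> {0..k}"
    then have ik: "i \<le> k" by simp
    have cm: "real (q choose k) * real (k choose i) = real (q choose i) * real ((q-i) choose (k-i))"
      using choose_mult[OF ik kq] by (metis of_nat_mult)
    have "real (q choose i) > 0" using ik kq by simp
    then show "(-1) ^ i * real (k choose i) * (real (v choose i) / real (q choose i)) =
        (-1) ^ i * real (v choose i) * real ((q-i) choose (k-i)) / real (q choose k)"
      using qk0 cm by (simp add: field_simps)
  qed simp
  also have "(\<Sum>i = 0..k. (-1) ^ i * real (v choose i) * real ((q-i) choose (k-i)))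
      = real_of_int (\<Sum>i=0..k. (-1)^i * int (v choose i) * int ((q-i) choose (k-i)))"
    by simp
  also have "\<dots> = real ((q-v) choose k)" using alt_id[OF vq] by simp
  finally have "real q * (real ((q-v) choose k) / real (q choose k)) < 1"
    using assms(3) unfolding q_def v_def by simp
  then have ineq: "q * ((q-v) choose k) < q choose k"
    using qk0 by (simp add: field_simps) (metis of_nat_less_iff of_nat_mult)
  define A where "A r = (\<lambda>c. r - c) ` range f" for r :: 'a
  define Bad where "Bad r = {S. S \<subseteq> - A r \<and> card S = k}" for r
  have cA: "card (A r) = v" for r
    unfolding A_def v_def proof (rule card_image)
    show "inj_on (\<lambda>c. r - c) (range f)"
    proof (rule inj_onI)
      fix x y assume "r - x = r - y"
      then show "x = y" by (metis add_left_cancel diff_conv_add_uminus neg_equal_iff_equal)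
    qed
  qed
  have cB: "card (Bad r) = (q-v) choose k" for r
  proof -
    have "card (Bad r) = card (- A r) choose k" unfolding Bad_def by (rule n_subsets) simp
    moreover have "card (- A r) = q - v" using card_Diff_subset[of "A r" UNIV] cA q_def by (simp add: Compl_eq_Diff_UNIV)
    ultimately show ?thesis by simp
  qed
  have "card (\<Union>r. Bad r) \<le> (\<Sum>r\<in>UNIV. card (Bad r))" by (rule card_UN_le) simp
  also have "\<dots> = q * ((q-v) choose k)" using cB q_def by simp
  finally have "card (\<Union>r. Bad r) < card {S. S \<subseteq> (UNIV::'a set) \<and> card S = k}"
    using ineq n_subsets[of "UNIV::'a set" k] q_def by simp
  then have "\<not> {S. S \<subseteq> (UNIV::'a set) \<and> card S = k} \<subseteq> (\<Union>r. Bad r)"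
    by (metis (no_types, lifting) card_mono finite_UN finite_UNIV finite_subset not_le subset_UNIV)
  then obtain S :: "'a set" where S: "card S = k" "\<And>r. S \<notin> Bad r" by blast
  have "is_cover_assoc f S"
    unfolding is_cover_assoc_def subtraction_table_entry_def
  proof
    fix r
    have "\<not> S \<subseteq> - A r" using S unfolding Bad_def by auto
    then show "\<exists>c\<in>range f. r - c \<in> S" unfolding A_def by auto
  qed
  then show ?thesis using S by blast
qed

end
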